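(* Let $d\ge2$, let $a$ be an i.i.d. conductivity function on $\mathbb{Z}^d$, $\xi\in\mathbb{R}^d$ with $|\xi|=1$, and let $\phi_T$ be the associated approximate corrector, $T>0$. Then for all $n\in2\mathbb{N}$, \[ \big\langle|\phi_T(0)|^n\big(|\nabla\phi_T(0)|^2+|\nabla^*\phi_T(0)|^2\big)\big\rangle\lesssim\langle|\phi_T(0)|^n\rangle, \] where the multiplicative constant depends on $n$, $\alpha$, $\beta$, $d$, but not on $T>0$.
   Context: A conductivity function on $\mathbb{Z}^d$ is $a:\mathbb{Z}^d\times\mathbb{Z}^d\to\mathbb{R}^+$ with $a(x,y)=0$ if $|x-y|\ne1$ and $a(x,y)=a(y,x)\in[\alpha,\beta]$ if $|x-y|=1$, $0<\alpha\le\beta$; i.i.d. means its edge values are independent identically distributed random variables; $\langle\cdot\rangle$ is expectation. With $e_1,\dots,e_d$ the canonical basis: $\nabla u(x)=(u(x+e_i)-u(x))_i$, $\nabla^*u(x)=(u(x)-u(x-e_i))_i$, $\nabla^*\cdot g=\sum_i\nabla_i^*g_i$, $A(x)=\operatorname{diag}(a(x,x+e_1),\dots,a(x,x+e_d))$. The approximate corrector $\phi_T$ is the unique stationary random function with $T^{-1}\phi_T-\nabla^*\cdot A(\nabla\phi_T+\xi)=0$ in $\mathbb{Z}^d$ and $\langle\phi_T\rangle=0$. $X\lesssim Y$ means $X\le CY$ with a constant $C$. *)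

theory Defs
  imports "HOL-Probability.Probability"
begin

text \<open>Lattice Z^d is represented as int^'d (dimension d = CARD('d)).
  An edge {x, x+e_i} is represented by the pair (x, i).
  An environment (sample point) is a function from edges to conductivity values;
  a(x, x+e_i) = omega (x, i).\<close>

definition unit_vec :: "'d::finite \<Rightarrow> int^'d" where
  "unit_vec i = (\<chi> j. if j = i then 1 else 0)"

definition grad :: "(int^'d::finite \<Rightarrow> real) \<Rightarrow> int^'d \<Rightarrow> real^'d" where
  "grad u x = (\<chi> i. u (x + unit_vec i) - u x)"

definition grad_star :: "(int^'d::finite \<Rightarrow> real) \<Rightarrow> int^'d \<Rightarrow> real^'d" where
  "grad_star u x = (\<chi> i. u x - u (x - unit_vec i))"

definition div_star :: "(int^'d::finite \<Rightarrow> real^'d) \<Rightarrow> int^'d \<Rightarrow> real" where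
  "div_star g x = (\<Sum>i\<in>UNIV. g x $ i - g (x - unit_vec i) $ i)"

text \<open>A(x) = diag(a(x,x+e_1),...,a(x,x+e_d)), applied to the vector v.\<close>
definition cond_apply :: "(((int^'d::finite) \<times> 'd) \<Rightarrow> real) \<Rightarrow> int^'d \<Rightarrow> real^'d \<Rightarrow> real^'d" where
  "cond_apply \<omega> x v = (\<chi> i. \<omega> (x, i) * v $ i)"

definition conductivity_law :: "real \<Rightarrow> real \<Rightarrow> real measure \<Rightarrow> bool" where
  "conductivity_law \<alpha> \<beta> \<mu> \<longleftrightarrow>
     prob_space \<mu> \<and> sets \<mu> = sets borel \<and> (AE t in \<mu>. \<alpha> \<le> t \<and> t \<le> \<beta>)"

text \<open>Canonical probability space of an i.i.d. conductivity function:
  infinite product of the single-edge law over all edges.\<close>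
definition env_measure :: "real measure \<Rightarrow> (((int^'d::finite) \<times> 'd) \<Rightarrow> real) measure" where
  "env_measure \<mu> = PiM UNIV (\<lambda>_. \<mu>)"

definition shift :: "int^'d::finite \<Rightarrow> (((int^'d) \<times> 'd) \<Rightarrow> real) \<Rightarrow> (((int^'d) \<times> 'd) \<Rightarrow> real)" where
  "shift z \<omega> = (\<lambda>(x, i). \<omega> (x + z, i))"

text \<open>Such a function exists and is unique (up to null sets).\<close>
definition approx_corrector ::
  "real measure \<Rightarrow> real^'d::finite \<Rightarrow> real \<Rightarrow> ((((int^'d) \<times> 'd) \<Rightarrow> real) \<Rightarrow> int^'d \<Rightarrow> real) \<Rightarrow> bool" where
  "approx_corrector \<mu> \<xi> T \<phi> \<longleftrightarrow>
     (\<forall>x. (\<lambda>\<omega>. \<phi> \<omega> x) \<in> borel_measurable (env_measure \<mu>)) \<and>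
     (\<forall>\<omega> x. \<phi> \<omega> x = \<phi> (shift x \<omega>) 0) \<and>
     (\<exists>K. \<forall>\<omega> x. \<bar>\<phi> \<omega> x\<bar> \<le> K) \<and>
     (AE \<omega> in env_measure \<mu>. \<forall>x.
        \<phi> \<omega> x / T - div_star (\<lambda>y. cond_apply \<omega> y (grad (\<phi> \<omega>) y + \<xi>)) x = 0) \<and>
     (\<integral>\<omega>. \<phi> \<omega> 0 \<partial>env_measure \<mu>) = 0"

end

theory Submission
  imports Defs
begin


lemma shift_shift: "shift y (shift z \<omega>) = shift (y + z) \<omega>"
  by (auto simp: shift_def fun_eq_iff add.assoc)

lemma env_prob: "prob_space \<mu> \<Longrightarrow> prob_space (env_measure \<mu>)"
  unfolding env_measure_def by (intro prob_space_PiM) auto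

lemma shift_measurable: "shift z \<in> measurable (env_measure \<mu>) (env_measure \<mu>)"
proof -
  have "(\<lambda>\<omega>. \<lambda>n\<in>UNIV. \<omega> ((\<lambda>(x,i). (x+z,i)) n)) \<in> measurable (PiM UNIV (\<lambda>_. \<mu>)) (PiM UNIV (\<lambda>n. (\<lambda>_. \<mu>) ((\<lambda>(x,i). (x+z,i)) n)))"
    by measurable
  moreover have "shift z = (\<lambda>\<omega>. \<lambda>n\<in>UNIV. \<omega> ((\<lambda>(x,i). (x+z,i)) n))"
    by (auto simp: shift_def fun_eq_iff)
  ultimately show ?thesis unfolding env_measure_def by simp
qed

lemma shift_distr: "prob_space \<mu> \<Longrightarrow> distr (env_measure \<mu>) (env_measure \<mu>) (shift z) = env_measure \<mu>"
proof -
  assume p: "prob_space \<mu>"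
  have "distr (PiM UNIV (\<lambda>_. \<mu>)) (PiM UNIV (\<lambda>n. (\<lambda>_. \<mu>) ((\<lambda>(x,i). (x+z,i)) n))) (\<lambda>\<omega>. \<lambda>n\<in>UNIV. \<omega> ((\<lambda>(x,i). (x+z,i)) n)) = (PiM UNIV (\<lambda>n. (\<lambda>_. \<mu>) ((\<lambda>(x,i). (x+z,i)) n)))"
    by (rule distr_PiM_reindex) (use p in \<open>auto simp: inj_on_def\<close>)
  moreover have "shift z = (\<lambda>\<omega>. \<lambda>n\<in>UNIV. \<omega> ((\<lambda>(x,i). (x+z,i)) n))"
    by (auto simp: shift_def fun_eq_iff)
  ultimately show ?thesis unfolding env_measure_def by simp
qed

lemma shift_integral:
  assumes "prob_space \<mu>" "g \<in> borel_measurable (env_measure \<mu>)"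
  shows "(\<integral>\<omega>. g (shift z \<omega>) \<partial>env_measure \<mu>) = (\<integral>\<omega>. (g \<omega>::real) \<partial>env_measure \<mu>)"
  using integral_distr[OF shift_measurable assms(2), of z] shift_distr[OF assms(1), of z] by simp

lemma comp_meas: "sets \<mu> = sets borel \<Longrightarrow> (\<lambda>\<omega>. \<omega> k) \<in> borel_measurable (env_measure \<mu>)"
  unfolding env_measure_def
  using measurable_component_singleton[of k UNIV "\<lambda>_. \<mu>"] measurable_cong_sets[OF refl, of \<mu> borel "PiM UNIV (\<lambda>_. \<mu>)"]
  by auto

lemma comp_AE: "conductivity_law \<alpha> \<beta> \<mu> \<Longrightarrow> AE \<omega> in env_measure \<mu>. \<alpha> \<le> \<omega> k \<and> \<omega> k \<le> \<beta>"
  unfolding env_measure_def conductivity_law_def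
  by (intro AE_PiM_component) auto



lemma B1: "0 \<le> b \<Longrightarrow> b \<le> (a::real) \<Longrightarrow> a^n*(a-b) \<le> a^(n+1) - b^(n+1)"
proof -
  assume h: "0 \<le> b" "b \<le> a"
  have "b^n \<le> a^n" using h by (intro power_mono) auto
  hence "b * b^n \<le> b * a^n" using h by (intro mult_left_mono) auto
  thus ?thesis by (simp add: algebra_simps)
qed

lemma B2: "0 \<le> b \<Longrightarrow> b \<le> (a::real) \<Longrightarrow> a^(n+1) - b^(n+1) \<le> (n+1)*a^n*(a-b)"
proof (induction n)
  case 0 then show ?case by simp
next
  case (Suc n)
  have IH: "a^(n+1) - b^(n+1) \<le> (n+1)*a^n*(a-b)" using Suc by simp
  have "a^(Suc n+1) - b^(Suc n+1) = a*(a^(n+1) - b^(n+1)) + b^(n+1)*(a-b)"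
    by (simp add: algebra_simps)
  also have "\<dots> \<le> a*((n+1)*a^n*(a-b)) + a^(n+1)*(a-b)"
    using Suc.prems IH by (intro add_mono mult_left_mono mult_right_mono power_mono) auto
  also have "\<dots> = (Suc n+1)*a^(Suc n)*(a-b)" by (simp add: algebra_simps)
  finally show ?case .
qed

lemma B3: "0 \<le> x \<Longrightarrow> 0 \<le> (y::real) \<Longrightarrow> x^n*y + y^n*x \<le> x^(n+1) + y^(n+1)"
proof -
  assume h: "0 \<le> x" "0 \<le> y"
  have "0 \<le> (x^n - y^n)*(x-y)"
  proof (cases "y \<le> x")
    case True then have "y^n \<le> x^n" using h by (intro power_mono) auto
    then show ?thesis using True by simp
  next
    case False then have "x^n \<le> y^n" using h by (intro power_mono) auto
    then show ?thesis using False by (intro mult_nonpos_nonpos) auto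
  qed
  thus ?thesis by (simp add: algebra_simps)
qed

definition Q1 :: "nat \<Rightarrow> real \<Rightarrow> real \<Rightarrow> bool" where
  "Q1 n s t \<longleftrightarrow> (\<bar>s\<bar>^n + \<bar>t\<bar>^n) * (s-t)^2 \<le> 2 * ((s^(n+1) - t^(n+1)) * (s-t))
     \<and> \<bar>s^(n+1) - t^(n+1)\<bar> \<le> (n+1) * (\<bar>s\<bar>^n + \<bar>t\<bar>^n) * \<bar>s-t\<bar>"

lemma Q1_swap: "Q1 n s t \<Longrightarrow> Q1 n t s"
  unfolding Q1_def by (simp add: power2_commute abs_minus_commute algebra_simps)

lemma Q1_neg: "even n \<Longrightarrow> Q1 n s t \<Longrightarrow> Q1 n (-s) (-t)"
proof -
  assume e: "even n" and q: "Q1 n s t"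
  have o: "odd (n+1)" using e by simp
  have p1: "(-s)^(n+1) = - (s^(n+1))" "(-t)^(n+1) = - (t^(n+1))" using o by auto
  have p2: "-s - -t = -(s-t)" "- (s^(n+1)) - - (t^(n+1)) = - (s^(n+1) - t^(n+1))" by simp_all
  show ?thesis using q unfolding Q1_def p1 p2 abs_minus_cancel power2_minus mult_minus_left mult_minus_right minus_minus .
qed

lemma Q1_pos: "0 \<le> t \<Longrightarrow> t \<le> s \<Longrightarrow> Q1 n s t"
proof -
  assume h: "0 \<le> t" "t \<le> s"
  have a: "s^n*(s-t) \<le> s^(n+1) - t^(n+1)" using B1 h by blast
  have b: "s^(n+1) - t^(n+1) \<le> (n+1)* s^n*(s-t)" using B2 h by blast
  have tn: "t^n \<le> s^n" using h by (intro power_mono) auto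
  have s0: "0 \<le> s" using h by simp
  have "(\<bar>s\<bar>^n + \<bar>t\<bar>^n) = s^n + t^n" using h s0 by simp
  also have "\<dots> \<le> 2* s^n" using tn by simp
  finally have "(\<bar>s\<bar>^n + \<bar>t\<bar>^n) * (s-t)^2 \<le> (2* s^n)*(s-t)^2"
    by (intro mult_right_mono) auto
  hence "(\<bar>s\<bar>^n + \<bar>t\<bar>^n) * (s-t)^2 \<le> (2* s^n*(s-t))*(s-t)"
    by (simp add: power2_eq_square mult.assoc)
  also have "\<dots> \<le> 2 * ((s^(n+1) - t^(n+1)) * (s-t))"
  proof -
    have "s^n*(s-t)*(s-t) \<le> (s^(n+1)-t^(n+1))*(s-t)" by (rule mult_right_mono[OF a]) (use h in simp)
    thus ?thesis by (simp add: mult.assoc)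
  qed
  finally have 1: "(\<bar>s\<bar>^n + \<bar>t\<bar>^n) * (s-t)^2 \<le> 2 * ((s^(n+1) - t^(n+1)) * (s-t))" .
  have "0 \<le> s^n*(s-t)" using h by simp
  hence "\<bar>s^(n+1) - t^(n+1)\<bar> = s^(n+1) - t^(n+1)" using a by linarith
  also have "\<dots> \<le> (n+1)* s^n*(s-t)" by (rule b)
  also have "\<dots> \<le> (n+1) * (\<bar>s\<bar>^n + \<bar>t\<bar>^n) * \<bar>s-t\<bar>"
  proof -
    have e1: "\<bar>s\<bar> = s" "\<bar>t\<bar> = t" "\<bar>s-t\<bar> = s-t" using h by auto
    have "s^n \<le> s^n + t^n" using h by simp
    hence "real (n+1) * s^n \<le> real (n+1) * (s^n + t^n)" by (intro mult_left_mono) auto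
    thus ?thesis unfolding e1 using h by (intro mult_right_mono) auto
  qed
  finally show ?thesis using 1 unfolding Q1_def by simp
qed

lemma Q1_mixed: "even n \<Longrightarrow> t \<le> 0 \<Longrightarrow> 0 \<le> s \<Longrightarrow> Q1 n s t"
proof -
  assume e: "even n" and h: "t \<le> 0" "0 \<le> s"
  define y where "y = -t"
  have y: "0 \<le> y" "t = -y" using h by (auto simp: y_def)
  have o: "odd (n+1)" using e by simp
  have tp: "t^(n+1) = - (y^(n+1))" using o y by simp
  have ta: "\<bar>t\<bar> = y" using y by simp
  have B: "s^n*y + y^n* s \<le> s^(n+1) + y^(n+1)" using B3 h y by blast
  have st: "s - t = s + y" using y by simp
  have "(\<bar>s\<bar>^n + \<bar>t\<bar>^n) * (s-t)^2 = ((s^n + y^n)*(s+y))*(s+y)"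
    unfolding st ta using h by (simp add: power2_eq_square)
  also have "\<dots> \<le> (2*(s^(n+1) + y^(n+1)))*(s+y)"
    using B h y by (intro mult_right_mono) (auto simp: algebra_simps)
  also have "\<dots> = 2 * ((s^(n+1) - t^(n+1)) * (s-t))" unfolding tp st by simp
  finally have 1: "(\<bar>s\<bar>^n + \<bar>t\<bar>^n) * (s-t)^2 \<le> 2 * ((s^(n+1) - t^(n+1)) * (s-t))" .
  have "\<bar>s^(n+1) - t^(n+1)\<bar> = s^(n+1) + y^(n+1)" unfolding tp using h y(1) by simp
  also have "\<dots> \<le> (s^n + y^n)*(s+y)"
    using h y by (simp add: algebra_simps)
  also have "\<dots> \<le> (n+1) * (\<bar>s\<bar>^n + \<bar>t\<bar>^n) * \<bar>s-t\<bar>"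
  proof -
    have X0: "0 \<le> (s^n+y^n)*(s+y)" using h y(1) by simp
    have "\<bar>s\<bar> = s" "\<bar>s+y\<bar> = s+y" using h y(1) by auto
    moreover have "(s^n+y^n)*(s+y) \<le> real (n+1) * ((s^n+y^n)*(s+y))"
    proof -
      have "0 \<le> real n * ((s^n+y^n)*(s+y))" using X0 by simp
      moreover have "real (n+1) * ((s^n+y^n)*(s+y)) = (s^n+y^n)*(s+y) + real n * ((s^n+y^n)*(s+y))"
        by (simp add: distrib_right)
      ultimately show ?thesis by linarith
    qed
    ultimately show ?thesis unfolding st ta by (simp add: mult.assoc)
  qed
  finally show ?thesis using 1 unfolding Q1_def by simp
qed

lemma Q1_all: "even n \<Longrightarrow> Q1 n s t"
proof -
  assume e: "even n"
  consider "0 \<le> t" "t \<le> s" | "0 \<le> s" "s \<le> t" | "t \<le> 0" "0 \<le> s" | "s \<le> 0" "0 \<le> t"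
    | "s \<le> 0" "t \<le> 0" by linarith
  then show ?thesis
  proof cases
    case 1 then show ?thesis by (rule Q1_pos)
  next
    case 2 then show ?thesis using Q1_pos Q1_swap by blast
  next
    case 3 then show ?thesis using Q1_mixed e by blast
  next
    case 4 then show ?thesis using Q1_mixed e Q1_swap by blast
  next
    case 5
    have "Q1 n (-s) (-t)"
    proof (cases "t \<le> s")
      case True then have "Q1 n (-t) (-s)" using 5 by (intro Q1_pos) auto
      then show ?thesis by (rule Q1_swap)
    next
      case False then show ?thesis using 5 by (intro Q1_pos) auto
    qed
    then show ?thesis using Q1_neg[OF e, of "-s" "-t"] by simp
  qed
qed



definition abdd :: "'a measure \<Rightarrow> ('a \<Rightarrow> real) \<Rightarrow> bool" where
  "abdd M f \<longleftrightarrow> (\<exists>B. AE x in M. \<bar>f x\<bar> \<le> B)"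

lemma abdd_nonneg:
  assumes "abdd M f" shows "\<exists>B\<ge>0. AE x in M. \<bar>f x\<bar> \<le> B"
proof -
  from assms obtain B where B: "AE x in M. \<bar>f x\<bar> \<le> B" unfolding abdd_def by blast
  have "AE x in M. \<bar>f x\<bar> \<le> max B 0" using B by (rule eventually_mono) simp
  thus ?thesis by (intro exI[of _ "max B 0"]) simp
qed

lemma abdd_bdd: "(\<And>x. \<bar>f x\<bar> \<le> B) \<Longrightarrow> abdd M f"
  unfolding abdd_def by (intro exI[of _ B] AE_I2) 

lemma abdd_const: "abdd M (\<lambda>x. c)"
  by (rule abdd_bdd[of _ "\<bar>c\<bar>"]) simp

lemma abdd_add: "abdd M f \<Longrightarrow> abdd M g \<Longrightarrow> abdd M (\<lambda>x. f x + g x)"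
proof -
  assume "abdd M f" "abdd M g"
  then obtain B1 B2 where B: "AE x in M. \<bar>f x\<bar> \<le> B1" "AE x in M. \<bar>g x\<bar> \<le> B2"
    unfolding abdd_def by blast
  have "AE x in M. \<bar>f x + g x\<bar> \<le> B1 + B2"
    using B(1) B(2) by (rule eventually_elim2) (rule order_trans[OF abs_triangle_ineq add_mono])
  thus ?thesis unfolding abdd_def by blast
qed

lemma abdd_uminus: "abdd M f \<Longrightarrow> abdd M (\<lambda>x. - f x)"
  unfolding abdd_def by simp

lemma abdd_diff: "abdd M f \<Longrightarrow> abdd M g \<Longrightarrow> abdd M (\<lambda>x. f x - g x)"
  using abdd_add[of M f "\<lambda>x. - g x"] abdd_uminus[of M g] by simp

lemma abdd_abs: "abdd M f \<Longrightarrow> abdd M (\<lambda>x. \<bar>f x\<bar>)"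
  unfolding abdd_def by simp

lemma abdd_mult: "abdd M f \<Longrightarrow> abdd M g \<Longrightarrow> abdd M (\<lambda>x. f x * g x)"
proof -
  assume f: "abdd M f" and g: "abdd M g"
  obtain B1 where B1: "B1 \<ge> 0" "AE x in M. \<bar>f x\<bar> \<le> B1" using abdd_nonneg[OF f] by blast
  obtain B2 where B2: "B2 \<ge> 0" "AE x in M. \<bar>g x\<bar> \<le> B2" using abdd_nonneg[OF g] by blast
  note B = B1(1) B2(1) B1(2) B2(2)
  have "AE x in M. \<bar>f x * g x\<bar> \<le> B1 * B2"
    using B(3) B(4)
  proof (rule eventually_elim2)
    fix x assume h: "\<bar>f x\<bar> \<le> B1" "\<bar>g x\<bar> \<le> B2"
    have "\<bar>f x\<bar> * \<bar>g x\<bar> \<le> B1 * B2" by (rule mult_mono[OF h(1) h(2) B(1) abs_ge_zero])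
    thus "\<bar>f x * g x\<bar> \<le> B1 * B2" by (simp only: abs_mult)
  qed
  thus ?thesis unfolding abdd_def by blast
qed

lemma abdd_power: "abdd M f \<Longrightarrow> abdd M (\<lambda>x. f x ^ k)"
proof (induction k)
  case 0 then show ?case using abdd_const[of M 1] by simp
next
  case (Suc k) then show ?case using abdd_mult[of M f "\<lambda>x. f x ^ k"] by simp
qed

lemma abdd_divide: "abdd M f \<Longrightarrow> abdd M (\<lambda>x. f x / c)"
  using abdd_mult[of M f "\<lambda>_. 1/c", OF _ abdd_const] by simp

lemma abdd_integrable: "finite_measure M \<Longrightarrow> abdd M f \<Longrightarrow> f \<in> borel_measurable M \<Longrightarrow> integrable M f"
proof -
  assume fm: "finite_measure M" and a: "abdd M f" and m: "f \<in> borel_measurable M"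
  from a obtain B where B: "AE x in M. \<bar>f x\<bar> \<le> B" unfolding abdd_def by blast
  have "AE x in M. norm (f x) \<le> B" using B by simp
  thus ?thesis by (rule finite_measure.integrable_const_bound[OF fm _ m])
qed



lemma young_aux:
  fixes \<alpha> k d :: real assumes "0 < \<alpha>"
  shows "k * \<bar>d\<bar> \<le> \<alpha>/4 * d^2 + k^2/\<alpha>"
proof -
  have "0 \<le> (\<alpha>*\<bar>d\<bar>/2 - k)^2" by simp
  also have "\<dots> = \<alpha>^2*d^2/4 - \<alpha>*(k*\<bar>d\<bar>) + k^2"
    by (simp add: power2_eq_square algebra_simps)
  finally have "\<alpha>*(k*\<bar>d\<bar>) \<le> \<alpha>*(\<alpha>/4 * d^2 + k^2/\<alpha>)"
    using assms by (simp add: algebra_simps power2_eq_square)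
  thus ?thesis using assms by (simp add: mult_le_cancel_left_pos)
qed

lemma ptw:
  fixes \<alpha> \<beta> a x Mv D \<Psi> k :: real
  assumes \<alpha>: "0 < \<alpha>" and a: "\<alpha> \<le> a" "a \<le> \<beta>" and x: "\<bar>x\<bar> \<le> 1" and M0: "0 \<le> Mv"
    and q1: "Mv * D^2 \<le> 2 * (\<Psi> * D)" and q2: "\<bar>\<Psi>\<bar> \<le> k * Mv * \<bar>D\<bar>" and k: "0 \<le> k"
  shows "\<alpha>/4 * (Mv * D^2) - (k*\<beta>)^2/\<alpha> * Mv \<le> a * (D + x) * \<Psi>"
proof -
  have DP: "0 \<le> \<Psi> * D" using q1 M0 by (smt (verit) mult_nonneg_nonneg zero_le_power2)
  have 1: "\<alpha> * (\<Psi> * D) \<le> a * (\<Psi> * D)" using a DP by (intro mult_right_mono) auto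
  have "\<bar>a * x * \<Psi>\<bar> = a * \<bar>x\<bar> * \<bar>\<Psi>\<bar>" using a \<alpha> by (simp add: abs_mult)
  also have "\<dots> \<le> \<beta> * 1 * (k * Mv * \<bar>D\<bar>)"
    using a \<alpha> x q2 by (intro mult_mono) auto
  finally have 2: "- (\<beta> * (k * Mv * \<bar>D\<bar>)) \<le> a * x * \<Psi>" by linarith
  have y: "(k*\<beta>) * \<bar>D\<bar> \<le> \<alpha>/4 * D^2 + (k*\<beta>)^2/\<alpha>" by (rule young_aux[OF \<alpha>])
  have 3: "\<beta> * (k * Mv * \<bar>D\<bar>) \<le> \<alpha>/4 * (Mv * D^2) + (k*\<beta>)^2/\<alpha> * Mv"
  proof -
    have "Mv * ((k*\<beta>) * \<bar>D\<bar>) \<le> Mv * (\<alpha>/4 * D^2 + (k*\<beta>)^2/\<alpha>)"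
      using y M0 by (intro mult_left_mono) auto
    thus ?thesis by (simp add: algebra_simps)
  qed
  have 4: "\<alpha>/2 * (Mv * D^2) \<le> \<alpha> * (\<Psi> * D)" using q1 \<alpha> by simp
  have "a * (D + x) * \<Psi> = a * (\<Psi> * D) + a * x * \<Psi>" by (simp add: algebra_simps)
  thus ?thesis using 1 2 3 4 by linarith
qed



lemma shift_app: "shift z \<omega> (x, i) = \<omega> (x + z, i)"
  by (simp add: shift_def)

lemma main:
  fixes \<phi> :: "(((int^'d::finite) \<times> 'd) \<Rightarrow> real) \<Rightarrow> int^'d \<Rightarrow> real" and \<xi> :: "real^'d"
  assumes law: "conductivity_law \<alpha> \<beta> \<mu>" and nx: "norm \<xi> = 1" and Tp: "T > 0"
    and ac: "approx_corrector \<mu> \<xi> T \<phi>" and \<alpha>: "0 < \<alpha>" and ev: "even n"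
  shows "(\<integral>\<omega>. \<bar>\<phi> \<omega> 0\<bar> ^ n * ((norm (grad (\<phi> \<omega>) 0))\<^sup>2 + (norm (grad_star (\<phi> \<omega>) 0))\<^sup>2) \<partial>env_measure \<mu>)
     \<le> (8 * real CARD('d) * (real n + 1)^2 * \<beta>^2 / \<alpha>^2) * (\<integral>\<omega>. \<bar>\<phi> \<omega> 0\<bar> ^ n \<partial>env_measure \<mu>)"
proof -
  define P where "P = (env_measure \<mu> :: (((int^'d) \<times> 'd) \<Rightarrow> real) measure)"
  have mu: "prob_space \<mu>" "sets \<mu> = sets borel" using law unfolding conductivity_law_def by auto
  have prob: "prob_space P" unfolding P_def using env_prob mu by blast
  then interpret prob_space P .
  have fin: "finite_measure P" by unfold_locales
  from ac obtain K where K: "\<And>\<omega> x. \<bar>\<phi> \<omega> x\<bar> \<le> K" unfolding approx_corrector_def by blast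
  have phim[measurable]: "\<And>x. (\<lambda>\<omega>. \<phi> \<omega> x) \<in> borel_measurable P"
    using ac unfolding approx_corrector_def P_def by blast
  have compm[measurable]: "\<And>k. (\<lambda>\<omega>. \<omega> k) \<in> borel_measurable P" unfolding P_def using comp_meas mu by blast
  have st0: "\<And>\<omega> x. \<phi> \<omega> x = \<phi> (shift x \<omega>) 0" using ac unfolding approx_corrector_def by blast
  have stat: "\<And>z \<omega> y. \<phi> (shift z \<omega>) y = \<phi> \<omega> (y + z)"
  proof -
    fix z \<omega> y
    have "\<phi> (shift z \<omega>) y = \<phi> (shift y (shift z \<omega>)) 0" by (rule st0)
    also have "\<dots> = \<phi> (shift (y+z) \<omega>) 0" by (simp add: shift_shift)
    also have "\<dots> = \<phi> \<omega> (y+z)" by (rule st0[symmetric])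
    finally show "\<phi> (shift z \<omega>) y = \<phi> \<omega> (y + z)" .
  qed
  have shiftI: "(\<integral>\<omega>. g (shift z \<omega>) \<partial>P) = integral\<^sup>L P g" if "g \<in> borel_measurable P" for g :: "_ \<Rightarrow> real" and z
    using shift_integral[OF mu(1), of g z] that unfolding P_def by simp
  have aAE: "\<And>k. AE \<omega> in P. \<alpha> \<le> \<omega> k \<and> \<omega> k \<le> \<beta>" unfolding P_def using comp_AE law by blast
  have eqAE: "AE \<omega> in P. \<forall>x. \<phi> \<omega> x / T - div_star (\<lambda>y. cond_apply \<omega> y (grad (\<phi> \<omega>) y + \<xi>)) x = 0"
    using ac unfolding approx_corrector_def P_def by blast
  have intg: "\<And>f. abdd P f \<Longrightarrow> f \<in> borel_measurable P \<Longrightarrow> integrable P f"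
    using abdd_integrable fin by blast
  have phib: "\<And>x. abdd P (\<lambda>\<omega>. \<phi> \<omega> x)" by (rule abdd_bdd, rule K)
  have ab: "\<And>k. abdd P (\<lambda>\<omega>. \<omega> k)"
  proof -
    fix k
    have "AE \<omega> in P. \<bar>\<omega> k\<bar> \<le> \<beta>" using aAE[of k] by eventually_elim (use \<alpha> in auto)
    thus "abdd P (\<lambda>\<omega>. \<omega> k)" unfolding abdd_def by blast
  qed
  note abI = abdd_add abdd_diff abdd_mult abdd_power abdd_abs abdd_const abdd_divide abdd_uminus phib ab

  define e where "e = (unit_vec :: 'd \<Rightarrow> int^'d)"
  define M where "M = (\<lambda>i \<omega>. \<bar>\<phi> \<omega> (e i)\<bar>^n + \<bar>\<phi> \<omega> 0\<bar>^n)"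
  define D where "D = (\<lambda>i \<omega>. \<phi> \<omega> (e i) - \<phi> \<omega> 0)"
  define \<Psi> where "\<Psi> = (\<lambda>i \<omega>. \<phi> \<omega> (e i)^(n+1) - \<phi> \<omega> 0^(n+1))"
  define G where "G = (\<lambda>i (\<omega>::((int^'d) \<times> 'd) \<Rightarrow> real). \<omega> (0,i) * (D i \<omega> + \<xi>$i))"
  define c where "c = ((real n+1)*\<beta>)^2/\<alpha>"
  have Mm[measurable]: "\<And>i. M i \<in> borel_measurable P" unfolding M_def by measurable
  have Dm[measurable]: "\<And>i. D i \<in> borel_measurable P" unfolding D_def by measurable
  have Pm[measurable]: "\<And>i. \<Psi> i \<in> borel_measurable P" unfolding \<Psi>_def by measurable
  have Gm[measurable]: "\<And>i. G i \<in> borel_measurable P" unfolding G_def by measurable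
  have Mb: "\<And>i. abdd P (M i)" unfolding M_def by (intro abI)
  have Db: "\<And>i. abdd P (D i)" unfolding D_def by (intro abI)
  have Pb: "\<And>i. abdd P (\<Psi> i)" unfolding \<Psi>_def by (intro abI)
  have Gb: "\<And>i. abdd P (G i)" unfolding G_def using Db by (intro abI)

  have intM: "\<And>f. abdd P f \<Longrightarrow> f \<in> borel_measurable P \<Longrightarrow> integrable P f" by (rule intg)
  have L1: "\<And>\<omega>. \<bar>\<phi> \<omega> 0\<bar> ^ n * ((norm (grad (\<phi> \<omega>) 0))\<^sup>2 + (norm (grad_star (\<phi> \<omega>) 0))\<^sup>2)
     = (\<Sum>i\<in>UNIV. \<bar>\<phi> \<omega> 0\<bar>^n * D i \<omega>^2) + (\<Sum>i\<in>UNIV. \<bar>\<phi> \<omega> 0\<bar>^n * (\<phi> \<omega> 0 - \<phi> \<omega> (- e i))^2)"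
  proof -
    fix \<omega>
    have nsq: "\<And>v::real^'d. (norm v)^2 = (\<Sum>i\<in>UNIV. (v$i)^2)"
      by (simp add: norm_vec_def L2_set_def sum_nonneg)
    show "?thesis \<omega>"
      unfolding nsq by (simp add: grad_def grad_star_def D_def e_def sum_distrib_left distrib_left)
  qed
  have L2: "(\<integral>\<omega>. \<bar>\<phi> \<omega> 0\<bar>^n * (\<phi> \<omega> 0 - \<phi> \<omega> (- e i))^2 \<partial>P) = (\<integral>\<omega>. \<bar>\<phi> \<omega> (e i)\<bar>^n * D i \<omega>^2 \<partial>P)" for i
    using shiftI[of "\<lambda>\<omega>. \<bar>\<phi> \<omega> (e i)\<bar>^n * D i \<omega>^2" "- e i"] by (simp add: stat D_def)
  have LHS: "(\<integral>\<omega>. \<bar>\<phi> \<omega> 0\<bar> ^ n * ((norm (grad (\<phi> \<omega>) 0))\<^sup>2 + (norm (grad_star (\<phi> \<omega>) 0))\<^sup>2) \<partial>P)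
     = (\<Sum>i\<in>UNIV. \<integral>\<omega>. M i \<omega> * D i \<omega>^2 \<partial>P)"
  proof -
    have i1: "integrable P (\<lambda>\<omega>. \<bar>\<phi> \<omega> 0\<bar>^n * D i \<omega>^2)" for i
      by (rule intM) (use Db in \<open>intro abI, measurable\<close>)
    have i2: "integrable P (\<lambda>\<omega>. \<bar>\<phi> \<omega> 0\<bar>^n * (\<phi> \<omega> 0 - \<phi> \<omega> (- e i))^2)" for i
      by (rule intM) (intro abI, measurable)
    have i3: "integrable P (\<lambda>\<omega>. \<bar>\<phi> \<omega> (e i)\<bar>^n * D i \<omega>^2)" for i
      by (rule intM) (use Db in \<open>intro abI, measurable\<close>)
    have "(\<integral>\<omega>. \<bar>\<phi> \<omega> 0\<bar> ^ n * ((norm (grad (\<phi> \<omega>) 0))\<^sup>2 + (norm (grad_star (\<phi> \<omega>) 0))\<^sup>2) \<partial>P)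
       = (\<integral>\<omega>. (\<Sum>i\<in>UNIV. \<bar>\<phi> \<omega> 0\<bar>^n * D i \<omega>^2) + (\<Sum>i\<in>UNIV. \<bar>\<phi> \<omega> 0\<bar>^n * (\<phi> \<omega> 0 - \<phi> \<omega> (- e i))^2) \<partial>P)"
      by (simp only: L1)
    also have "\<dots> = (\<Sum>i\<in>UNIV. \<integral>\<omega>. \<bar>\<phi> \<omega> 0\<bar>^n * D i \<omega>^2 \<partial>P) + (\<Sum>i\<in>UNIV. \<integral>\<omega>. \<bar>\<phi> \<omega> 0\<bar>^n * (\<phi> \<omega> 0 - \<phi> \<omega> (- e i))^2 \<partial>P)"
      using i1 i2 by (simp add: integral_add integral_sum integrable_sum)
    also have "\<dots> = (\<Sum>i\<in>UNIV. (\<integral>\<omega>. \<bar>\<phi> \<omega> 0\<bar>^n * D i \<omega>^2 \<partial>P) + (\<integral>\<omega>. \<bar>\<phi> \<omega> (e i)\<bar>^n * D i \<omega>^2 \<partial>P))"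
      by (simp add: L2 sum.distrib)
    also have "\<dots> = (\<Sum>i\<in>UNIV. \<integral>\<omega>. M i \<omega> * D i \<omega>^2 \<partial>P)"
      using i1 i3 by (intro sum.cong refl) (simp add: M_def integral_add[symmetric] distrib_right add.commute)
    finally show ?thesis .
  qed

  \<comment> \<open>Step B: test the equation with phi(0)^(n+1)\<close>
  define H where "H = (\<lambda>i (\<omega>::((int^'d) \<times> 'd) \<Rightarrow> real). \<omega> (- e i, i) * (\<phi> \<omega> 0 - \<phi> \<omega> (- e i) + \<xi>$i))"
  have Hm[measurable]: "\<And>i. H i \<in> borel_measurable P" unfolding H_def by measurable
  have Hb: "\<And>i. abdd P (H i)" unfolding H_def by (intro abI)
  have divE: "\<And>\<omega>. div_star (\<lambda>y. cond_apply \<omega> y (grad (\<phi> \<omega>) y + \<xi>)) 0 = (\<Sum>i\<in>UNIV. G i \<omega> - H i \<omega>)"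
    by (simp add: div_star_def cond_apply_def grad_def G_def D_def H_def e_def)
  have B1: "AE \<omega> in P. \<phi> \<omega> 0 ^ (n+2) / T = (\<Sum>i\<in>UNIV. G i \<omega> * \<phi> \<omega> 0^(n+1) - H i \<omega> * \<phi> \<omega> 0^(n+1))"
    using eqAE
  proof eventually_elim
    case (elim \<omega>)
    hence "\<phi> \<omega> 0 / T = (\<Sum>i\<in>UNIV. G i \<omega> - H i \<omega>)" using divE[of \<omega>] by (metis eq_iff_diff_eq_0)
    hence "\<phi> \<omega> 0 / T * \<phi> \<omega> 0^(n+1) = (\<Sum>i\<in>UNIV. G i \<omega> - H i \<omega>) * \<phi> \<omega> 0^(n+1)" by simp
    thus ?case by (simp add: sum_distrib_right left_diff_distrib power_Suc)
  qed
  have HE: "(\<integral>\<omega>. H i \<omega> * \<phi> \<omega> 0^(n+1) \<partial>P) = (\<integral>\<omega>. G i \<omega> * \<phi> \<omega> (e i)^(n+1) \<partial>P)" for i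
    using shiftI[of "\<lambda>\<omega>. G i \<omega> * \<phi> \<omega> (e i)^(n+1)" "- e i"]
    by (simp add: stat G_def H_def D_def shift_app)
  have iG0: "integrable P (\<lambda>\<omega>. G i \<omega> * \<phi> \<omega> 0^(n+1))" for i by (rule intM) (use Gb in \<open>intro abI, measurable\<close>)
  have iGe: "integrable P (\<lambda>\<omega>. G i \<omega> * \<phi> \<omega> (e i)^(n+1))" for i by (rule intM) (use Gb in \<open>intro abI, measurable\<close>)
  have iH: "integrable P (\<lambda>\<omega>. H i \<omega> * \<phi> \<omega> 0^(n+1))" for i by (rule intM) (use Hb in \<open>intro abI, measurable\<close>)
  have iGP: "integrable P (\<lambda>\<omega>. G i \<omega> * \<Psi> i \<omega>)" for i by (rule intM) (use Gb Pb in \<open>intro abI, measurable\<close>)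
  have GPE: "(\<integral>\<omega>. G i \<omega> * \<Psi> i \<omega> \<partial>P) = (\<integral>\<omega>. G i \<omega> * \<phi> \<omega> (e i)^(n+1) \<partial>P) - (\<integral>\<omega>. G i \<omega> * \<phi> \<omega> 0^(n+1) \<partial>P)" for i
    using iG0 iGe by (simp add: \<Psi>_def right_diff_distrib integral_diff[symmetric])
  have B2: "(\<integral>\<omega>. \<phi> \<omega> 0 ^ (n+2) / T \<partial>P) = - (\<Sum>i\<in>UNIV. \<integral>\<omega>. G i \<omega> * \<Psi> i \<omega> \<partial>P)"
  proof -
    have "(\<integral>\<omega>. \<phi> \<omega> 0 ^ (n+2) / T \<partial>P) = (\<integral>\<omega>. (\<Sum>i\<in>UNIV. G i \<omega> * \<phi> \<omega> 0^(n+1) - H i \<omega> * \<phi> \<omega> 0^(n+1)) \<partial>P)"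
      by (rule integral_cong_AE) (use B1 in auto)
    also have "\<dots> = (\<Sum>i\<in>UNIV. (\<integral>\<omega>. G i \<omega> * \<phi> \<omega> 0^(n+1) \<partial>P) - (\<integral>\<omega>. H i \<omega> * \<phi> \<omega> 0^(n+1) \<partial>P))"
      using iG0 iH by (simp add: integral_sum integral_diff)
    also have "\<dots> = - (\<Sum>i\<in>UNIV. \<integral>\<omega>. G i \<omega> * \<Psi> i \<omega> \<partial>P)"
      unfolding HE GPE by (simp add: sum_subtractf)
    finally show ?thesis .
  qed
  have B3: "(\<Sum>i\<in>UNIV. \<integral>\<omega>. G i \<omega> * \<Psi> i \<omega> \<partial>P) \<le> 0"
  proof -
    have "0 \<le> (\<integral>\<omega>. \<phi> \<omega> 0 ^ (n+2) / T \<partial>P)"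
    proof (intro integral_nonneg_AE AE_I2)
      fix \<omega>
      have "0 \<le> \<phi> \<omega> 0 ^ (n+2)" using ev by (intro zero_le_even_power) auto
      thus "0 \<le> \<phi> \<omega> 0 ^ (n+2) / T" using Tp by simp
    qed
    thus ?thesis using B2 by linarith
  qed

  have C1: "AE \<omega> in P. \<alpha>/4 * (M i \<omega> * D i \<omega>^2) - c * M i \<omega> \<le> G i \<omega> * \<Psi> i \<omega>" for i
    using aAE[of "(0,i)"]
  proof eventually_elim
    case (elim \<omega>)
    have q: "Q1 n (\<phi> \<omega> (e i)) (\<phi> \<omega> 0)" using Q1_all ev by blast
    have x: "\<bar>\<xi>$i\<bar> \<le> 1" using component_le_norm_cart[of \<xi> i] nx by simp
    have "\<alpha>/4 * (M i \<omega> * D i \<omega>^2) - ((real n + 1)*\<beta>)^2/\<alpha> * M i \<omega> \<le> \<omega> (0,i) * (D i \<omega> + \<xi>$i) * \<Psi> i \<omega>"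
      by (rule ptw[OF \<alpha> _ _ x]) (use elim q in \<open>auto simp: M_def D_def \<Psi>_def Q1_def add.commute\<close>)
    thus ?case by (simp add: c_def G_def)
  qed
  have iMD: "integrable P (\<lambda>\<omega>. M i \<omega> * D i \<omega>^2)" for i by (rule intM) (use Mb Db in \<open>intro abI, measurable\<close>)
  have iM: "integrable P (M i)" for i by (rule intM[OF Mb Mm])
  have iM': "integrable P (\<lambda>\<omega>. M i \<omega>)" for i using iM[of i] by simp
  have i0: "integrable P (\<lambda>\<omega>. \<bar>\<phi> \<omega> 0\<bar>^n)" by (rule intM) (intro abI, measurable)
  have ie: "integrable P (\<lambda>\<omega>. \<bar>\<phi> \<omega> (e i)\<bar>^n)" for i by (rule intM) (intro abI, measurable)
  have EM: "(\<integral>\<omega>. M i \<omega> \<partial>P) = 2 * (\<integral>\<omega>. \<bar>\<phi> \<omega> 0\<bar>^n \<partial>P)" for i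
  proof -
    have "(\<integral>\<omega>. \<bar>\<phi> \<omega> (e i)\<bar>^n \<partial>P) = (\<integral>\<omega>. \<bar>\<phi> \<omega> 0\<bar>^n \<partial>P)"
      using shiftI[of "\<lambda>\<omega>. \<bar>\<phi> \<omega> 0\<bar>^n" "e i"] by (simp add: stat)
    thus ?thesis using i0 ie unfolding M_def by (simp add: integral_add)
  qed
  have C2: "\<alpha>/4 * (\<integral>\<omega>. M i \<omega> * D i \<omega>^2 \<partial>P) - c * (2 * (\<integral>\<omega>. \<bar>\<phi> \<omega> 0\<bar>^n \<partial>P)) \<le> (\<integral>\<omega>. G i \<omega> * \<Psi> i \<omega> \<partial>P)" for i
  proof -
    have "(\<integral>\<omega>. \<alpha>/4 * (M i \<omega> * D i \<omega>^2) - c * M i \<omega> \<partial>P) \<le> (\<integral>\<omega>. G i \<omega> * \<Psi> i \<omega> \<partial>P)"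
      by (rule integral_mono_AE[OF _ iGP C1]) (use iMD iM' in auto)
    thus ?thesis using iMD iM' EM[of i] by (simp add: integral_diff)
  qed
  define S where "S = (\<Sum>i\<in>UNIV. \<integral>\<omega>. M i \<omega> * D i \<omega>^2 \<partial>P)"
  define E0 where "E0 = (\<integral>\<omega>. \<bar>\<phi> \<omega> 0\<bar>^n \<partial>P)"
  have "(\<Sum>i\<in>(UNIV::'d set). \<alpha>/4 * (\<integral>\<omega>. M i \<omega> * D i \<omega>^2 \<partial>P) - c * (2 * E0)) \<le> 0"
  proof -
    have "(\<Sum>i\<in>(UNIV::'d set). \<alpha>/4 * (\<integral>\<omega>. M i \<omega> * D i \<omega>^2 \<partial>P) - c * (2 * E0)) \<le> (\<Sum>i\<in>UNIV. \<integral>\<omega>. G i \<omega> * \<Psi> i \<omega> \<partial>P)"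
      by (rule sum_mono) (use C2 in \<open>simp add: E0_def\<close>)
    thus ?thesis using B3 by linarith
  qed
  hence "\<alpha>/4 * S \<le> real CARD('d) * (c * (2 * E0))"
    unfolding S_def by (simp add: sum_subtractf sum_distrib_left)
  hence "(4/\<alpha>) * (\<alpha>/4 * S) \<le> (4/\<alpha>) * (real CARD('d) * (c * (2 * E0)))"
    using \<alpha> by (intro mult_left_mono) auto
  hence "S \<le> (4/\<alpha>) * (real CARD('d) * (c * (2 * E0)))"
    using \<alpha> by simp
  also have "\<dots> = (8 * real CARD('d) * (real n + 1)^2 * \<beta>^2 / \<alpha>^2) * E0"
    unfolding c_def by (simp add: field_simps power2_eq_square)
  finally have F: "S \<le> (8 * real CARD('d) * (real n + 1)^2 * \<beta>^2 / \<alpha>^2) * E0" .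
  have "(\<integral>\<omega>. \<bar>\<phi> \<omega> 0\<bar> ^ n * ((norm (grad (\<phi> \<omega>) 0))\<^sup>2 + (norm (grad_star (\<phi> \<omega>) 0))\<^sup>2) \<partial>P)
     \<le> (8 * real CARD('d) * (real n + 1)^2 * \<beta>^2 / \<alpha>^2) * E0"
    unfolding LHS S_def[symmetric] by (rule F)
  thus ?thesis unfolding P_def E0_def .
qed

theorem lemma2p7:
  fixes \<alpha> \<beta> :: real and n :: nat
  assumes "CARD('d::finite) \<ge> 2" and "0 < \<alpha>" and "\<alpha> \<le> \<beta>" and "even n"
  shows "\<exists>C::real. \<forall>(\<mu>::real measure) (\<xi>::real^'d) (T::real)
           (\<phi>::(((int^'d) \<times> 'd) \<Rightarrow> real) \<Rightarrow> int^'d \<Rightarrow> real).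
           conductivity_law \<alpha> \<beta> \<mu> \<and> norm \<xi> = 1 \<and> T > 0 \<and> approx_corrector \<mu> \<xi> T \<phi> \<longrightarrow>
           (\<integral>\<omega>. \<bar>\<phi> \<omega> 0\<bar> ^ n * ((norm (grad (\<phi> \<omega>) 0))\<^sup>2 + (norm (grad_star (\<phi> \<omega>) 0))\<^sup>2)
              \<partial>(env_measure \<mu> :: (((int^'d) \<times> 'd) \<Rightarrow> real) measure))
           \<le> C * (\<integral>\<omega>. \<bar>\<phi> \<omega> 0\<bar> ^ n \<partial>(env_measure \<mu> :: (((int^'d) \<times> 'd) \<Rightarrow> real) measure))"
  apply (intro exI[of _ "8 * real CARD('d) * (real n + 1)^2 * \<beta>^2 / \<alpha>^2"] allI impI)
  apply (elim conjE)
  apply (erule (3) main[OF _ _ _ _ assms(2) assms(4)])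
  done

end
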